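(* Let $\lambda>0$ and let $(X_1,\dots,X_n)$ be a random vector with joint survival function $$\Pr(X_1>x_1,\dots,X_n>x_n)=\exp\big(-\lambda\sqrt{x_1+\dots+x_n}\big),\qquad x_1,\dots,x_n\ge 0,$$ i.e. each $X_i$ is Weibull with shape parameter $1/2$ and survival function $\exp(-\lambda\sqrt{x})$, and the survival copula is the Gumbel copula with generator $\phi(t)=(-\log t)^2$. Then the pdf of $S_n=X_1+\dots+X_n$ is $$f_{S_n}(x)=\frac{\lambda}{2^{2n-1}\Gamma(n)}\sum_{k=0}^{n-1}\frac{(2(n-1)-k)!}{(n-k-1)!\,k!}(2\lambda)^k x^{(k-1)/2}e^{-\lambda\sqrt{x}},\qquad x> 0,$$ and $f_{S_n}(x)=0$ for $x<0$. *)

theory Defs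
  imports "HOL-Probability.Probability"
begin

end

theory Submission
  imports Defs
begin


fun cc :: "real \<Rightarrow> nat \<Rightarrow> nat \<Rightarrow> real" where
  "cc l 0 j = (if j = 0 then 1 else 0)"
| "cc l (Suc k) j = (real k - real j / 2) * cc l k j + (if j > 0 then l/2 * cc l k (j - 1) else 0)"

definition PP :: "real \<Rightarrow> nat \<Rightarrow> real \<Rightarrow> real" where
  "PP l k s = exp (- l * sqrt s) * (\<Sum>j\<le>k. cc l k j * s powr (real j / 2 - real k))"

declare cc.simps(2)[simp del]

lemma cc_zero: "j > k \<Longrightarrow> cc l k j = 0"
  by (induction k arbitrary: j) (auto simp: cc.simps)

lemma cc_nonneg: "l \<ge> 0 \<Longrightarrow> cc l k j \<ge> 0"
proof (induction k arbitrary: j)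
  case 0 then show ?case by auto
next
  case (Suc k)
  have "(real k - real j / 2) * cc l k j \<ge> 0"
  proof (cases "j > k")
    case True then show ?thesis by (simp add: cc_zero)
  next
    case False then show ?thesis using Suc by (intro mult_nonneg_nonneg) auto
  qed
  then show ?case using Suc by (auto simp: cc.simps)
qed

lemma term_deriv:
  assumes "s > 0"
  shows "((\<lambda>s. exp (- l * sqrt s) * s powr p) has_real_derivative
     exp (- l * sqrt s) * (p * s powr (p - 1) - l / 2 * s powr (p + 1/2 - 1))) (at s)"
proof -
  have "((\<lambda>s. exp (- l * sqrt s) * s powr p) has_real_derivative
     exp (- l * sqrt s) * (- l * (inverse (sqrt s) / 2)) * s powr p + exp (- l * sqrt s) * (p * s powr (p - 1))) (at s)"
    using assms by (auto intro!: derivative_eq_intros)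
  moreover have "exp (- l * sqrt s) * (- l * (inverse (sqrt s) / 2)) * s powr p + exp (- l * sqrt s) * (p * s powr (p - 1))
     = exp (- l * sqrt s) * (p * s powr (p - 1) - l / 2 * s powr (p + 1/2 - 1))"
  proof -
    have "inverse (sqrt s) * s powr p = s powr (p + 1/2 - 1)"
    proof -
      have "s powr (p + 1/2 - 1) = s powr p / s powr (1/2)"
        using assms by (simp add: powr_diff [symmetric])
      then show ?thesis using assms by (simp add: powr_half_sqrt field_simps)
    qed
    then show ?thesis by (simp add: algebra_simps)
  qed
  ultimately show ?thesis by simp
qed

lemma PP_deriv:
  assumes "s > 0"
  shows "(PP l k has_real_derivative - PP l (Suc k) s) (at s)"
proof -
  define e where "e = exp (- l * sqrt s)"
  have eq: "PP l k = (\<lambda>s. \<Sum>j\<le>k. cc l k j * (exp (- l * sqrt s) * s powr (real j / 2 - real k)))"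
    by (auto simp: PP_def sum_distrib_left algebra_simps fun_eq_iff)
  have D: "(PP l k has_real_derivative (\<Sum>j\<le>k. cc l k j * (e * ((real j / 2 - real k) * s powr (real j / 2 - real k - 1)
       - l / 2 * s powr (real j / 2 - real k + 1/2 - 1))))) (at s)"
    unfolding eq e_def
    by (intro DERIV_sum DERIV_cmult term_deriv assms)
  have s1: "(\<Sum>j\<le>Suc k. (real k - real j / 2) * cc l k j * s powr (real j / 2 - real (Suc k)))
      = (\<Sum>j\<le>k. (real k - real j / 2) * cc l k j * s powr (real j / 2 - real k - 1))"
    by (simp add: cc_zero algebra_simps)
  have s2: "(\<Sum>j\<le>Suc k. (if j > 0 then l/2 * cc l k (j - 1) else 0) * s powr (real j / 2 - real (Suc k)))
      = (\<Sum>j\<le>k. l/2 * cc l k j * s powr (real j / 2 - real k + 1/2 - 1))"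
    by (subst sum.atMost_Suc_shift) (simp add: algebra_simps add_divide_distrib)
  have "- PP l (Suc k) s = - e * ((\<Sum>j\<le>Suc k. (real k - real j / 2) * cc l k j * s powr (real j / 2 - real (Suc k)))
      + (\<Sum>j\<le>Suc k. (if j > 0 then l/2 * cc l k (j - 1) else 0) * s powr (real j / 2 - real (Suc k))))"
    by (simp add: PP_def e_def cc.simps sum.distrib [symmetric] algebra_simps del: of_nat_Suc)
  also have "\<dots> = (\<Sum>j\<le>k. cc l k j * (e * ((real j / 2 - real k) * s powr (real j / 2 - real k - 1)
       - l / 2 * s powr (real j / 2 - real k + 1/2 - 1))))"
    unfolding s1 s2 by (simp add: sum_distrib_left sum.distrib [symmetric] sum_negf [symmetric] algebra_simps)
  finally show ?thesis using D by simp
qed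

definition cf :: "real \<Rightarrow> nat \<Rightarrow> nat \<Rightarrow> real" where
  "cf l n j = l / 2 ^ (2 * n - 1) * (fact (2 * (n - 1) - j) / (fact (n - j - 1) * fact j)) * (2 * l) ^ j"

lemma cf_id0: "cf l (Suc (Suc m)) 0 = (real (Suc m) - 1/2) * cf l (Suc m) 0"
proof -
  define F :: real where "F = fact (2 * m)"
  define G :: real where "G = fact m"
  define P :: real where "P = 2 ^ (2 * m + 1)"
  have pos: "F > 0" "G > 0" "P > 0" by (auto simp: F_def G_def P_def)
  have e1: "cf l (Suc (Suc m)) 0 = l / (4 * P) * ((2 * real m + 2) * (2 * real m + 1) * F / ((real m + 1) * G))"
  proof -
    have "fact (2 * m + 2) = (2 * real m + 2) * (2 * real m + 1) * (fact (2 * m) :: real)"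
      by (simp add: fact_Suc algebra_simps)
    moreover have "fact (m + 1) = (real m + 1) * (fact m :: real)" by (simp add: fact_Suc algebra_simps)
    moreover have "(2::real) ^ (2 * m + 3) = 4 * 2 ^ (2 * m + 1)" by (simp add: power_add)
    moreover have "2 * Suc (Suc m) - 1 = 2 * m + 3" "2 * (Suc (Suc m) - 1) = 2 * m + 2" by auto
    ultimately show ?thesis unfolding cf_def F_def G_def P_def by (simp add: algebra_simps)
  qed
  have e2: "cf l (Suc m) 0 = l / P * (F / G)"
  proof -
    have "2 * Suc m - 1 = 2 * m + 1" by auto
    then show ?thesis unfolding cf_def F_def G_def P_def by simp
  qed
  define a where "a = real m + 1"
  have a: "a > 0" "real m = a - 1" by (auto simp: a_def)
  show ?thesis unfolding e1 e2 of_nat_Suc a(2) using pos a(1) by (simp add: field_simps)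
qed

lemma cf_idlast: "cf l (Suc (Suc m)) (Suc m) = l / 2 * cf l (Suc m) m"
proof -
  define P :: real where "P = 2 ^ (2 * m + 1)"
  have pos: "P > 0" by (auto simp: P_def)
  have e1: "cf l (Suc (Suc m)) (Suc m) = l / (4 * P) * (2 * l) ^ (Suc m)"
  proof -
    have "(2::real) ^ (2 * m + 3) = 4 * 2 ^ (2 * m + 1)" by (simp add: power_add)
    moreover have "2 * Suc (Suc m) - 1 = 2 * m + 3" "2 * (Suc (Suc m) - 1) - Suc m = Suc m" by auto
    ultimately show ?thesis unfolding cf_def P_def by simp
  qed
  have e2: "cf l (Suc m) m = l / P * (2 * l) ^ m"
  proof -
    have "2 * Suc m - 1 = 2 * m + 1" "2 * (Suc m - 1) - m = m" by auto
    then show ?thesis unfolding cf_def P_def by simp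
  qed
  show ?thesis unfolding e1 e2 using pos by (simp add: field_simps)
qed

lemma cf_idmid:
  assumes "m = Suc i + r"
  shows "cf l (Suc (Suc m)) (Suc i) = (real (Suc m) - real (Suc (Suc i)) / 2) * cf l (Suc m) (Suc i) + l / 2 * cf l (Suc m) i"
proof -
  define F :: real where "F = fact (i + 2 * r + 1)"
  define G :: real where "G = fact r"
  define H :: real where "H = fact i"
  define P :: real where "P = 2 ^ (2 * i + 2 * r + 3)"
  define Q :: real where "Q = (2 * l) ^ i"
  have pos: "F > 0" "G > 0" "H > 0" "P > 0" by (auto simp: F_def G_def H_def P_def)
  have a: "2 * Suc m - 1 = 2 * i + 2 * r + 3" "2 * (Suc (Suc m) - 1) - Suc i = i + 2 * r + 3"
     "Suc (Suc m) - Suc i - 1 = r + 1" "2 * Suc (Suc m) - 1 = 2 * i + 2 * r + 5"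
     "2 * (Suc m - 1) - Suc i = i + 2 * r + 1" "Suc m - Suc i - 1 = r"
     "2 * (Suc m - 1) - i = i + 2 * r + 2" "Suc m - i - 1 = r + 1"
    using assms by auto
  have f: "fact (i + 2 * r + 3) = (real i + 2 * real r + 3) * (real i + 2 * real r + 2) * F"
     "fact (i + 2 * r + 2) = (real i + 2 * real r + 2) * F"
     "fact (r + 1) = (real r + 1) * G"
     "fact (Suc i) = (real i + 1) * H"
    by (simp_all add: F_def G_def H_def fact_Suc algebra_simps numeral_3_eq_3 numeral_2_eq_2)
  have p: "(2::real) ^ (2 * i + 2 * r + 5) = 4 * P" "(2::real) ^ (2 * i + 2 * r + 3) = P"
    by (simp_all add: power_add P_def)
  have q: "(2 * l) ^ Suc i = 2 * l * Q" by (simp add: Q_def)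
  have m: "real m = real i + real r + 1" using assms by simp
  have e1: "cf l (Suc (Suc m)) (Suc i) = l / (4 * P) * ((real i + 2 * real r + 3) * (real i + 2 * real r + 2) * F / ((real r + 1) * G * ((real i + 1) * H))) * (2 * l * Q)"
    unfolding cf_def a f p q by simp
  have e2: "cf l (Suc m) (Suc i) = l / P * (F / (G * ((real i + 1) * H))) * (2 * l * Q)"
    unfolding cf_def a f p q F_def G_def by simp
  have e3: "cf l (Suc m) i = l / P * ((real i + 2 * real r + 2) * F / ((real r + 1) * G * H)) * Q"
    unfolding cf_def a f p q H_def Q_def by simp
  define R where "R = real r + 1"
  define I where "I = real i + 1"
  have RI: "R > 0" "I > 0" "real r = R - 1" "real i = I - 1" by (auto simp: R_def I_def)
  show ?thesis unfolding e1 e2 e3 m of_nat_Suc RI(3,4) using pos RI(1,2) by (simp add: field_simps)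
qed

lemma cc_closed_aux: "cc l (Suc m) 0 = 0 \<and> (\<forall>j<Suc m. cc l (Suc m) (Suc j) = cf l (Suc m) j)"
proof (induction m)
  case 0
  then show ?case by (auto simp: cf_def cc.simps)
next
  case (Suc m)
  have z: "cc l (Suc (Suc m)) 0 = 0" using Suc by (simp add: cc.simps)
  have "cc l (Suc (Suc m)) (Suc j) = cf l (Suc (Suc m)) j" if "j < Suc (Suc m)" for j
  proof -
    have rec: "cc l (Suc (Suc m)) (Suc j) = (real (Suc m) - real (Suc j) / 2) * cc l (Suc m) (Suc j) + l / 2 * cc l (Suc m) j"
      by (simp only: cc.simps if_True zero_less_Suc diff_Suc_1)
    consider "j = 0" | i where "j = Suc i" "i < m" | "j = Suc m" using that
    proof (cases j)
      case (Suc i)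
      then show ?thesis using that \<open>j < Suc (Suc m)\<close> by (cases "i = m") auto
    qed
    then show ?thesis
    proof cases
      case 1
      have "cc l (Suc m) (Suc 0) = cf l (Suc m) 0" "cc l (Suc m) 0 = 0" using Suc.IH by auto
      then show ?thesis unfolding rec unfolding 1 cf_id0 by simp
    next
      case 2
      then have "m = Suc i + (m - Suc i)" by simp
      have "cc l (Suc m) (Suc (Suc i)) = cf l (Suc m) (Suc i)" "cc l (Suc m) (Suc i) = cf l (Suc m) i"
        using Suc.IH 2 by auto
      then show ?thesis unfolding rec unfolding 2 cf_idmid[OF \<open>m = Suc i + (m - Suc i)\<close>] by simp
    next
      case 3
      have "cc l (Suc m) (Suc (Suc m)) = 0" "cc l (Suc m) (Suc m) = cf l (Suc m) m"
        using Suc.IH by (auto simp: cc_zero)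
      then show ?thesis unfolding rec unfolding 3 cf_idlast by simp
    qed
  qed
  then show ?case using z by blast
qed



definition Hs :: "real set set" where
  "Hs = {{y<..} | y. y > 0} \<union> {{..a} | a. a \<le> 0} \<union> {{}}"

lemma Hs_Int_stable: "Int_stable Hs"
  unfolding Int_stable_def
proof (intro ballI)
  fix A B assume A: "A \<in> Hs" and B: "B \<in> Hs"
  have e1: "{y<..} \<inter> {z<..} = {max y z<..}" for y z :: real by auto
  have e2: "y > 0 \<Longrightarrow> a \<le> 0 \<Longrightarrow> {y<..} \<inter> {..a} = {}" for y a :: real by auto
  have e3: "y > 0 \<Longrightarrow> a \<le> 0 \<Longrightarrow> {..a} \<inter> {y<..} = {}" for y a :: real by auto
  have e4: "{..a} \<inter> {..b} = {..min a b}" for a b :: real by auto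
  from A B show "A \<inter> B \<in> Hs" unfolding Hs_def
    by (auto simp: e1 e4 e2 e3)
qed

lemma Hs_sets: "sets borel = sigma_sets UNIV Hs"
proof -
  have "sets borel = sigma_sets UNIV (range (\<lambda>a. {..a::real}))"
    by (subst borel_eq_atMost) (simp add: sets_measure_of)
  also have "\<dots> = sigma_sets UNIV Hs"
  proof (rule sigma_sets_eqI)
    fix A assume "A \<in> range (\<lambda>a. {..a::real})"
    then obtain a where A: "A = {..a}" by auto
    show "A \<in> sigma_sets UNIV Hs"
    proof (cases "a \<le> 0")
      case True then show ?thesis unfolding A Hs_def by auto
    next
      case False
      then have "{a<..} \<in> sigma_sets UNIV Hs" unfolding Hs_def by auto
      moreover have "UNIV - {a<..} = {..a}" by auto
      ultimately show ?thesis unfolding A using sigma_sets.Compl by metis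
    qed
  next
    fix B assume "B \<in> Hs"
    then have "B \<in> sets borel" unfolding Hs_def by auto
    then show "B \<in> sigma_sets UNIV (range (\<lambda>a. {..a::real}))"
      using \<open>sets borel = sigma_sets UNIV (range (\<lambda>a. {..a::real}))\<close> by simp
  qed
  finally show ?thesis .
qed

lemma U1:
  fixes \<mu> \<nu> :: "real measure"
  assumes "sets \<mu> = sets borel" "sets \<nu> = sets borel" "finite_measure \<mu>"
    and "\<And>y. y > 0 \<Longrightarrow> emeasure \<mu> {y<..} = emeasure \<nu> {y<..}"
    and "\<And>a. a \<le> 0 \<Longrightarrow> emeasure \<mu> {..a} = emeasure \<nu> {..a}"
  shows "\<mu> = \<nu>"
proof (rule measure_eqI_generator_eq[OF Hs_Int_stable, of UNIV])
  show "Hs \<subseteq> Pow UNIV" by simp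
  show "\<And>X. X \<in> Hs \<Longrightarrow> emeasure \<mu> X = emeasure \<nu> X" using assms(4,5) unfolding Hs_def by auto
  show "sets \<mu> = sigma_sets UNIV Hs" "sets \<nu> = sigma_sets UNIV Hs" using assms(1,2) Hs_sets by auto
  define A where "A i = (if i = 0 then {..0} else {1 / real i<..})" for i :: nat
  show "range A \<subseteq> Hs" unfolding A_def Hs_def by auto
  show "(\<Union>i. A i) = UNIV"
  proof (intro set_eqI iffI)
    fix x :: real
    show "x \<in> (\<Union>i. A i)"
    proof (cases "x \<le> 0")
      case True then show ?thesis by (intro UN_I[of 0]) (auto simp: A_def)
    next
      case False
      then obtain n :: nat where "n > 0" "1 / real n < x"
        by (metis not_le ex_inverse_of_nat_less inverse_eq_divide)
      then show ?thesis by (intro UN_I[of n]) (auto simp: A_def)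
    qed
  qed auto
  show "\<And>i. emeasure \<mu> (A i) \<noteq> \<infinity>"
    using finite_measure.emeasure_finite[OF assms(3)] by simp
qed



definition goodfam :: "(nat \<Rightarrow> real \<Rightarrow> real) \<Rightarrow> bool" where
  "goodfam E \<longleftrightarrow> (\<forall>k s. s > 0 \<longrightarrow> (E k has_real_derivative - E (Suc k) s) (at s))
     \<and> (\<forall>k s. s > 0 \<longrightarrow> E k s \<ge> 0) \<and> (\<forall>k. (E k \<longlongrightarrow> 0) at_top) \<and> (\<forall>k. E k \<in> borel_measurable borel)"

lemma goodfam_shift:
  assumes "goodfam E" "y \<ge> 0"
  shows "goodfam (\<lambda>k s. E k (s + y))"
  unfolding goodfam_def
proof (intro conjI allI impI)
  fix k s assume "(s::real) > 0"
  then have "s + y > 0" using assms by simp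
  then have "(E k has_real_derivative - E (Suc k) (s + y)) (at (s + y))" using assms by (auto simp: goodfam_def)
  moreover have d2: "((\<lambda>s. s + y) has_real_derivative 1) (at s)" by (auto intro!: derivative_eq_intros)
  ultimately show "((\<lambda>s. E k (s + y)) has_real_derivative - E (Suc k) (s + y)) (at s)"
    using DERIV_chain2[of "E k" _ "\<lambda>s. s+y" s 1 UNIV] by simp
  show "E k (s + y) \<ge> 0" using assms \<open>s + y > 0\<close> by (auto simp: goodfam_def)
next
  fix k
  have "(E k \<longlongrightarrow> 0) at_top" using assms by (auto simp: goodfam_def)
  then show "((\<lambda>s. E k (s + y)) \<longlongrightarrow> 0) at_top"
    by (rule filterlim_compose) (use filterlim_tendsto_add_at_top[OF tendsto_const[of y] filterlim_ident] in \<open>simp add: add.commute\<close>)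
  have "E k \<in> borel_measurable borel" using assms by (auto simp: goodfam_def)
  then show "(\<lambda>s. E k (s + y)) \<in> borel_measurable borel" by measurable
qed

lemma goodfam_FTC:
  assumes "goodfam E" "y > 0"
  shows "(\<integral>\<^sup>+ s. ennreal (E (Suc k) s) * indicator {y<..} s \<partial>lborel) = ennreal (E k y)"
proof -
  have "(\<integral>\<^sup>+ s. ennreal (E (Suc k) s) * indicator {y<..} s \<partial>lborel) = (\<integral>\<^sup>+ s. ennreal (E (Suc k) s) * indicator {y..} s \<partial>lborel)"
  proof (rule nn_integral_cong_AE)
    show "AE x in lborel. ennreal (E (Suc k) x) * indicator {y<..} x = ennreal (E (Suc k) x) * indicator {y..} x"
      using AE_lborel_singleton[of y] by eventually_elim (auto split: split_indicator)
  qed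
  also have "\<dots> = ennreal (0 - (- E k y))"
  proof (rule nn_integral_FTC_atLeast)
    show "E (Suc k) \<in> borel_measurable borel" using assms by (auto simp: goodfam_def)
    show "((\<lambda>s. - E k s) has_real_derivative E (Suc k) x) (at x)" if "y \<le> x" for x
      using assms that DERIV_minus[of "E k" "- E (Suc k) x" x] by (auto simp: goodfam_def)
    show "0 \<le> E (Suc k) x" if "y \<le> x" for x using assms that by (auto simp: goodfam_def)
    show "((\<lambda>s. - E k s) \<longlongrightarrow> 0) at_top" using assms tendsto_minus[of "E k" 0 at_top] by (auto simp: goodfam_def)
  qed
  finally show ?thesis by simp
qed

lemma base_law:
  assumes E: "goodfam E" and N: "finite_measure N" and Y[measurable]: "Y \<in> borel_measurable N"
    and pos: "AE \<omega> in N. Y \<omega> > 0"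
    and surv: "\<And>y. y \<ge> 0 \<Longrightarrow> emeasure N {\<omega>\<in>space N. y < Y \<omega>} = ennreal (E 0 y)"
  shows "distr N lborel Y = density lborel (\<lambda>s. ennreal (if 0 < s then E 1 s else 0))"
proof (rule U1)
  have Em[measurable]: "E k \<in> borel_measurable borel" for k using E by (auto simp: goodfam_def)
  show "sets (distr N lborel Y) = sets borel" by simp
  show "sets (density lborel (\<lambda>s. ennreal (if 0 < s then E 1 s else 0))) = sets borel" by simp
  show "finite_measure (distr N lborel Y)" using N by (intro finite_measure.finite_measure_distr) auto
  fix y :: real assume "y > 0"
  have "emeasure (distr N lborel Y) {y<..} = emeasure N {\<omega>\<in>space N. y < Y \<omega>}"
    by (subst emeasure_distr) (auto intro!: arg_cong[where f="emeasure N"])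
  also have "\<dots> = ennreal (E 0 y)" using surv \<open>y > 0\<close> by simp
  also have "\<dots> = (\<integral>\<^sup>+ s. ennreal (E (Suc 0) s) * indicator {y<..} s \<partial>lborel)"
    using goodfam_FTC[OF E \<open>y > 0\<close>, of 0] by simp
  also have "\<dots> = emeasure (density lborel (\<lambda>s. ennreal (if 0 < s then E 1 s else 0))) {y<..}"
    using \<open>y > 0\<close> by (subst emeasure_density) (auto intro!: nn_integral_cong split: split_indicator)
  finally show "emeasure (distr N lborel Y) {y<..} = emeasure (density lborel (\<lambda>s. ennreal (if 0 < s then E 1 s else 0))) {y<..}" .
next
  have Em[measurable]: "E k \<in> borel_measurable borel" for k using E by (auto simp: goodfam_def)
  fix a :: real assume "a \<le> 0"
  have "emeasure (distr N lborel Y) {..a} = emeasure N {\<omega>\<in>space N. Y \<omega> \<le> a}"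
    by (subst emeasure_distr) (auto intro!: arg_cong[where f="emeasure N"])
  also have "\<dots> = 0" using pos \<open>a \<le> 0\<close> by (intro emeasure_eq_0_AE) (auto elim!: eventually_mono)
  also have "\<dots> = emeasure (density lborel (\<lambda>s. ennreal (if 0 < s then E 1 s else 0))) {..a}"
    using \<open>a \<le> 0\<close> by (subst emeasure_density) (auto intro!: nn_integral_zero' split: split_indicator)
  finally show "emeasure (distr N lborel Y) {..a} = emeasure (density lborel (\<lambda>s. ennreal (if 0 < s then E 1 s else 0))) {..a}" .
qed



lemma rect_law:
  fixes q :: "real \<Rightarrow> real \<Rightarrow> real"
  assumes E: "goodfam E" and N: "finite_measure N"
   and S[measurable]: "S \<in> borel_measurable N" and T[measurable]: "T \<in> borel_measurable N"
   and posT: "AE \<omega> in N. T \<omega> > 0"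
   and IH: "\<And>y. y > 0 \<Longrightarrow> distr (density N (indicator {\<omega>\<in>space N. y < T \<omega>})) lborel S
        = density lborel (\<lambda>s. ennreal (if 0 < s then s^m/fact m * E (Suc m) (s + y) else 0))"
   and q_def: "q = (\<lambda>s y. if 0 < s \<and> 0 < y then s^m/fact m * E (Suc (Suc m)) (s+y) else 0)"
   and a[measurable]: "a \<in> sets borel"
  shows "distr (density N (indicator {\<omega>\<in>space N. S \<omega> \<in> a})) lborel T
     = density lborel (\<lambda>y. \<integral>\<^sup>+ s. ennreal (q s y) * indicator a s \<partial>lborel)"
proof -
  have Em[measurable]: "E k \<in> borel_measurable borel" for k using E by (auto simp: goodfam_def)
  have Enn: "\<And>k t. 0 < t \<Longrightarrow> 0 \<le> E k t" using E by (auto simp: goodfam_def)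
  have qm[measurable]: "(\<lambda>p. q (fst p) (snd p)) \<in> borel_measurable (lborel \<Otimes>\<^sub>M lborel)"
    unfolding q_def by measurable
  have qm'[measurable]: "case_prod q \<in> borel_measurable (lborel \<Otimes>\<^sub>M lborel)"
    using qm by (simp add: case_prod_beta')
  define NA where "NA = density N (indicator {\<omega>\<in>space N. S \<omega> \<in> a})"
  have sNA: "space NA = space N" "sets NA = sets N" unfolding NA_def by auto
  have NAm[measurable]: "T \<in> borel_measurable NA" using T unfolding NA_def by simp
  show ?thesis unfolding NA_def[symmetric]
  proof (rule U1)
    show "sets (distr NA lborel T) = sets borel" by simp
    show "sets (density lborel (\<lambda>y. \<integral>\<^sup>+ s. ennreal (q s y) * indicator a s \<partial>lborel)) = sets borel" by simp
    show "finite_measure (distr NA lborel T)" unfolding NA_def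
      using finite_measure.finite_measure_restricted[OF N]
      by (intro finite_measure.finite_measure_distr) auto
  next
    fix y :: real assume y: "y > 0"
    have "emeasure (distr NA lborel T) {y<..} = emeasure N ({\<omega>\<in>space N. S \<omega> \<in> a} \<inter> {\<omega>\<in>space N. y < T \<omega>})"
      unfolding NA_def by (subst emeasure_distr) (auto simp: emeasure_restricted intro!: arg_cong[where f="emeasure N"])
    also have "\<dots> = emeasure (distr (density N (indicator {\<omega>\<in>space N. y < T \<omega>})) lborel S) a"
      by (subst emeasure_distr) (auto simp: emeasure_restricted intro!: arg_cong[where f="emeasure N"])
    also have "\<dots> = (\<integral>\<^sup>+ s. ennreal (if 0 < s then s^m/fact m * E (Suc m) (s + y) else 0) * indicator a s \<partial>lborel)"
      unfolding IH[OF y] by (subst emeasure_density) auto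
    also have "\<dots> = (\<integral>\<^sup>+ s. (\<integral>\<^sup>+ y'. ennreal (q s y') * indicator a s * indicator {y<..} y' \<partial>lborel) \<partial>lborel)"
    proof (rule nn_integral_cong)
      fix s :: real
      show "ennreal (if 0 < s then s^m/fact m * E (Suc m) (s + y) else 0) * indicator a s
          = (\<integral>\<^sup>+ y'. ennreal (q s y') * indicator a s * indicator {y<..} y' \<partial>lborel)"
      proof (cases "s > 0")
        case True
        have gs: "goodfam (\<lambda>k t. E k (t + s))" using goodfam_shift[OF E] True by simp
        have "(\<integral>\<^sup>+ y'. ennreal (q s y') * indicator a s * indicator {y<..} y' \<partial>lborel)
           = (\<integral>\<^sup>+ y'. ennreal (s^m/fact m) * indicator a s * (ennreal (E (Suc (Suc m)) (y' + s)) * indicator {y<..} y') \<partial>lborel)"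
          using True y by (intro nn_integral_cong) (auto simp: q_def add.commute Enn ennreal_mult[symmetric] split: split_indicator)
        also have "\<dots> = ennreal (s^m/fact m) * indicator a s * (\<integral>\<^sup>+ y'. ennreal (E (Suc (Suc m)) (y' + s)) * indicator {y<..} y' \<partial>lborel)"
          by (subst nn_integral_cmult) auto
        also have "\<dots> = ennreal (s^m/fact m) * indicator a s * ennreal (E (Suc m) (y + s))"
          using goodfam_FTC[OF gs y, of "Suc m"] by simp
        finally show ?thesis using True y
          by (simp add: ennreal_mult[symmetric] Enn add.commute mult_ac)
      next
        case False
        then show ?thesis by (simp add: q_def)
      qed
    qed
    also have "\<dots> = (\<integral>\<^sup>+ y'. (\<integral>\<^sup>+ s. ennreal (q s y') * indicator a s * indicator {y<..} y' \<partial>lborel) \<partial>lborel)"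
      by (rule lborel_pair.Fubini'[symmetric]) measurable
    also have "\<dots> = (\<integral>\<^sup>+ y'. (\<integral>\<^sup>+ s. ennreal (q s y') * indicator a s \<partial>lborel) * indicator {y<..} y' \<partial>lborel)"
      by (intro nn_integral_cong) (simp add: nn_integral_multc)
    also have "\<dots> = emeasure (density lborel (\<lambda>y. \<integral>\<^sup>+ s. ennreal (q s y) * indicator a s \<partial>lborel)) {y<..}"
      by (subst emeasure_density) auto
    finally show "emeasure (distr NA lborel T) {y<..} = emeasure (density lborel (\<lambda>y. \<integral>\<^sup>+ s. ennreal (q s y) * indicator a s \<partial>lborel)) {y<..}" .
  next
    fix b :: real assume b: "b \<le> 0"
    have "emeasure (distr NA lborel T) {..b} = emeasure N {\<omega>\<in>space N. S \<omega> \<in> a \<and> T \<omega> \<le> b}"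
      unfolding NA_def by (subst emeasure_distr) (auto simp: emeasure_restricted intro!: arg_cong[where f="emeasure N"])
    also have "\<dots> = 0" using posT b by (intro emeasure_eq_0_AE) (auto elim!: eventually_mono)
    also have "\<dots> = emeasure (density lborel (\<lambda>y. \<integral>\<^sup>+ s. ennreal (q s y) * indicator a s \<partial>lborel)) {..b}"
      using b by (subst emeasure_density) (auto intro!: nn_integral_zero' simp: q_def split: split_indicator)
    finally show "emeasure (distr NA lborel T) {..b} = emeasure (density lborel (\<lambda>y. \<integral>\<^sup>+ s. ennreal (q s y) * indicator a s \<partial>lborel)) {..b}" .
  qed
qed

lemma pair_law:
  fixes q :: "real \<Rightarrow> real \<Rightarrow> real"
  assumes E: "goodfam E" and N: "finite_measure N"
   and S[measurable]: "S \<in> borel_measurable N" and T[measurable]: "T \<in> borel_measurable N"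
   and posT: "AE \<omega> in N. T \<omega> > 0"
   and IH: "\<And>y. y > 0 \<Longrightarrow> distr (density N (indicator {\<omega>\<in>space N. y < T \<omega>})) lborel S
        = density lborel (\<lambda>s. ennreal (if 0 < s then s^m/fact m * E (Suc m) (s + y) else 0))"
   and q_def: "q = (\<lambda>s y. if 0 < s \<and> 0 < y then s^m/fact m * E (Suc (Suc m)) (s+y) else 0)"
  shows "distr N (lborel \<Otimes>\<^sub>M lborel) (\<lambda>\<omega>. (S \<omega>, T \<omega>)) = density (lborel \<Otimes>\<^sub>M lborel) (\<lambda>p. ennreal (q (fst p) (snd p)))"
proof (rule measure_eqI_generator_eq[OF Int_stable_pair_measure_generator[of lborel lborel], of UNIV])
  have Em[measurable]: "E k \<in> borel_measurable borel" for k using E by (auto simp: goodfam_def)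
  have qm[measurable]: "(\<lambda>p. q (fst p) (snd p)) \<in> borel_measurable (lborel \<Otimes>\<^sub>M lborel)"
    unfolding q_def by measurable
  have qm'[measurable]: "case_prod q \<in> borel_measurable (lborel \<Otimes>\<^sub>M lborel)"
    using qm by (simp add: case_prod_beta')
  show "{a \<times> b |a b. a \<in> sets lborel \<and> b \<in> sets lborel} \<subseteq> Pow UNIV" by simp
  show "sets (distr N (lborel \<Otimes>\<^sub>M lborel) (\<lambda>\<omega>. (S \<omega>, T \<omega>))) = sigma_sets UNIV {a \<times> b |a b. a \<in> sets lborel \<and> b \<in> sets lborel}"
    by (simp add: sets_pair_measure)
  show "sets (density (lborel \<Otimes>\<^sub>M lborel) (\<lambda>p. ennreal (q (fst p) (snd p)))) = sigma_sets UNIV {a \<times> b |a b. a \<in> sets lborel \<and> b \<in> sets lborel}"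
    by (simp add: sets_pair_measure)
  show "range (\<lambda>_. UNIV) \<subseteq> {a \<times> b |a b. a \<in> sets lborel \<and> b \<in> sets lborel}" by (auto intro!: exI[of _ UNIV])
  show "(\<Union>i::nat. UNIV) = (UNIV :: (real \<times> real) set)" by simp
  show "emeasure (distr N (lborel \<Otimes>\<^sub>M lborel) (\<lambda>\<omega>. (S \<omega>, T \<omega>))) UNIV \<noteq> \<infinity>" for i :: nat
    using finite_measure.emeasure_finite[OF finite_measure.finite_measure_distr[OF N, of "\<lambda>\<omega>. (S \<omega>, T \<omega>)" "lborel \<Otimes>\<^sub>M lborel"]]
    by simp
  fix X :: "(real \<times> real) set" assume "X \<in> {a \<times> b |a b. a \<in> sets lborel \<and> b \<in> sets lborel}"
  then obtain a b where X: "X = a \<times> b" and a[measurable]: "a \<in> sets borel" and b[measurable]: "b \<in> sets borel" by auto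
  have "emeasure (distr N (lborel \<Otimes>\<^sub>M lborel) (\<lambda>\<omega>. (S \<omega>, T \<omega>))) X
      = emeasure (distr (density N (indicator {\<omega>\<in>space N. S \<omega> \<in> a})) lborel T) b"
    unfolding X by (simp add: emeasure_distr emeasure_restricted) (auto intro!: arg_cong[where f="emeasure N"])
  also have "\<dots> = emeasure (density lborel (\<lambda>y. \<integral>\<^sup>+ s. ennreal (q s y) * indicator a s \<partial>lborel)) b"
    using rect_law[OF E N S T posT IH q_def a] by simp
  also have "\<dots> = (\<integral>\<^sup>+ y. (\<integral>\<^sup>+ s. ennreal (q s y) * indicator a s \<partial>lborel) * indicator b y \<partial>lborel)"
    by (subst emeasure_density) auto
  also have "\<dots> = (\<integral>\<^sup>+ y. (\<integral>\<^sup>+ s. ennreal (q (fst (s, y)) (snd (s, y))) * indicator X (s, y) \<partial>lborel) \<partial>lborel)"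
  proof (intro nn_integral_cong)
    fix y :: real
    have "(\<integral>\<^sup>+ s. ennreal (q s y) * indicator a s \<partial>lborel) * indicator b y
        = (\<integral>\<^sup>+ s. ennreal (q s y) * indicator a s * indicator b y \<partial>lborel)"
      by (rule nn_integral_multc[symmetric]) measurable
    also have "\<dots> = (\<integral>\<^sup>+ s. ennreal (q (fst (s, y)) (snd (s, y))) * indicator X (s, y) \<partial>lborel)"
      unfolding X by (intro nn_integral_cong) (simp add: indicator_times mult_ac)
    finally show "(\<integral>\<^sup>+ s. ennreal (q s y) * indicator a s \<partial>lborel) * indicator b y
        = (\<integral>\<^sup>+ s. ennreal (q (fst (s, y)) (snd (s, y))) * indicator X (s, y) \<partial>lborel)" .
  qed
  also have "\<dots> = (\<integral>\<^sup>+ p. ennreal (q (fst p) (snd p)) * indicator X p \<partial>(lborel \<Otimes>\<^sub>M lborel))"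
    by (rule lborel_pair.nn_integral_snd) (unfold X, measurable)
  also have "\<dots> = emeasure (density (lborel \<Otimes>\<^sub>M lborel) (\<lambda>p. ennreal (q (fst p) (snd p)))) X"
    unfolding X by (subst emeasure_density) auto
  finally show "emeasure (distr N (lborel \<Otimes>\<^sub>M lborel) (\<lambda>\<omega>. (S \<omega>, T \<omega>))) X = emeasure (density (lborel \<Otimes>\<^sub>M lborel) (\<lambda>p. ennreal (q (fst p) (snd p)))) X" .
qed

lemma power_integral:
  assumes "u > 0"
  shows "(\<integral>\<^sup>+ s. ennreal (s^m/fact m) * indicator {0<..<u} s \<partial>lborel) = ennreal (u^(Suc m)/fact (Suc m))"
proof -
  have "(\<integral>\<^sup>+ s. ennreal (s^m/fact m) * indicator {0<..<u} s \<partial>lborel) = (\<integral>\<^sup>+ s. ennreal (s^m/fact m) * indicator {0..u} s \<partial>lborel)"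
  proof (rule nn_integral_cong_AE)
    show "AE s in lborel. ennreal (s^m/fact m) * indicator {0<..<u} s = ennreal (s^m/fact m) * indicator {0..u} s"
      using AE_lborel_singleton[of 0] AE_lborel_singleton[of u] by eventually_elim (auto split: split_indicator)
  qed
  also have "\<dots> = ennreal (u^(Suc m)/fact (Suc m) - 0^(Suc m)/fact (Suc m))"
  proof (rule nn_integral_FTC_Icc)
    show "(\<lambda>s::real. s^m/fact m) \<in> borel_measurable borel" by measurable
    show "((\<lambda>s::real. s^(Suc m)/fact (Suc m)) has_real_derivative x^m/fact m) (at x)" for x :: real
    proof -
      have "((\<lambda>s::real. s^(Suc m)) has_real_derivative real (Suc m) * x^(Suc m - 1)) (at x)"
        using DERIV_pow[of "Suc m" x] by simp
      from DERIV_cdivide[OF this, of "fact (Suc m)"]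
      have "((\<lambda>s::real. s^(Suc m)/fact (Suc m)) has_real_derivative (real (Suc m) * x^m)/fact (Suc m)) (at x)"
        by simp
      moreover have "(real (Suc m) * x^m)/fact (Suc m) = x^m/fact m"
        by (simp add: fact_Suc field_simps del: of_nat_Suc)
      ultimately show ?thesis by simp
    qed
    show "0 \<le> x^m/fact m" if "x \<in> {0..u}" for x :: real using that by simp
    show "0 \<le> u" using assms by simp
  qed
  finally show ?thesis by simp
qed

lemma sum_law:
  fixes q :: "real \<Rightarrow> real \<Rightarrow> real"
  assumes E: "goodfam E"
   and S[measurable]: "S \<in> borel_measurable N" and T[measurable]: "T \<in> borel_measurable N"
   and pair: "distr N (lborel \<Otimes>\<^sub>M lborel) (\<lambda>\<omega>. (S \<omega>, T \<omega>)) = density (lborel \<Otimes>\<^sub>M lborel) (\<lambda>p. ennreal (q (fst p) (snd p)))"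
   and q_def: "q = (\<lambda>s y. if 0 < s \<and> 0 < y then s^m/fact m * E (Suc (Suc m)) (s+y) else 0)"
  shows "distr N lborel (\<lambda>\<omega>. S \<omega> + T \<omega>) = density lborel (\<lambda>s. ennreal (if 0 < s then s^(Suc m)/fact (Suc m) * E (Suc (Suc m)) s else 0))"
proof -
  have Em[measurable]: "E k \<in> borel_measurable borel" for k using E by (auto simp: goodfam_def)
  have Enn: "\<And>k t. 0 < t \<Longrightarrow> 0 \<le> E k t" using E by (auto simp: goodfam_def)
  have qm[measurable]: "(\<lambda>p. q (fst p) (snd p)) \<in> borel_measurable (lborel \<Otimes>\<^sub>M lborel)"
    unfolding q_def by measurable
  have qm'[measurable]: "case_prod q \<in> borel_measurable (lborel \<Otimes>\<^sub>M lborel)"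
    using qm by (simp add: case_prod_beta')
  define f where "f = (\<lambda>s::real. if 0 < s then s^(Suc m)/fact (Suc m) * E (Suc (Suc m)) s else 0)"
  have fm[measurable]: "f \<in> borel_measurable borel" unfolding f_def by measurable
  have "distr N lborel (\<lambda>\<omega>. S \<omega> + T \<omega>) = distr (distr N (lborel \<Otimes>\<^sub>M lborel) (\<lambda>\<omega>. (S \<omega>, T \<omega>))) lborel (\<lambda>p. fst p + snd p)"
    by (subst distr_distr) (auto simp: comp_def)
  also have "\<dots> = distr (density (lborel \<Otimes>\<^sub>M lborel) (\<lambda>p. ennreal (q (fst p) (snd p)))) lborel (\<lambda>p. fst p + snd p)"
    unfolding pair ..
  also have "\<dots> = density lborel (\<lambda>s. ennreal (f s))"
  proof (rule measure_eqI)
    show "sets (distr (density (lborel \<Otimes>\<^sub>M lborel) (\<lambda>p. ennreal (q (fst p) (snd p)))) lborel (\<lambda>p. fst p + snd p)) = sets (density lborel (\<lambda>s. ennreal (f s)))"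
      by simp
    fix B assume "B \<in> sets (distr (density (lborel \<Otimes>\<^sub>M lborel) (\<lambda>p. ennreal (q (fst p) (snd p)))) lborel (\<lambda>p. fst p + snd p))"
    then have B[measurable]: "B \<in> sets borel" by simp
    have "emeasure (distr (density (lborel \<Otimes>\<^sub>M lborel) (\<lambda>p. ennreal (q (fst p) (snd p)))) lborel (\<lambda>p. fst p + snd p)) B
        = (\<integral>\<^sup>+ p. ennreal (q (fst p) (snd p)) * indicator B (fst p + snd p) \<partial>(lborel \<Otimes>\<^sub>M lborel))"
    proof -
      have "emeasure (distr (density (lborel \<Otimes>\<^sub>M lborel) (\<lambda>p. ennreal (q (fst p) (snd p)))) lborel (\<lambda>p. fst p + snd p)) B
          = emeasure (density (lborel \<Otimes>\<^sub>M lborel) (\<lambda>p. ennreal (q (fst p) (snd p)))) {p\<in>space (lborel \<Otimes>\<^sub>M lborel). fst p + snd p \<in> B}"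
        by (subst emeasure_distr) (auto intro!: arg_cong[where f="emeasure _"])
      also have "\<dots> = (\<integral>\<^sup>+ p. ennreal (q (fst p) (snd p)) * indicator {p\<in>space (lborel \<Otimes>\<^sub>M lborel). fst p + snd p \<in> B} p \<partial>(lborel \<Otimes>\<^sub>M lborel))"
        by (rule emeasure_density) measurable
      also have "\<dots> = (\<integral>\<^sup>+ p. ennreal (q (fst p) (snd p)) * indicator B (fst p + snd p) \<partial>(lborel \<Otimes>\<^sub>M lborel))"
        by (intro nn_integral_cong) (auto simp: space_pair_measure split: split_indicator)
      finally show ?thesis .
    qed
    also have "\<dots> = (\<integral>\<^sup>+ s. (\<integral>\<^sup>+ y. ennreal (q s y) * indicator B (s + y) \<partial>lborel) \<partial>lborel)"
      by (subst lborel.nn_integral_fst[symmetric]) auto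
    also have "\<dots> = (\<integral>\<^sup>+ s. (\<integral>\<^sup>+ u. ennreal (q s (u - s)) * indicator B u \<partial>lborel) \<partial>lborel)"
    proof (rule nn_integral_cong)
      fix s :: real
      have "(\<integral>\<^sup>+ u. ennreal (q s (u - s)) * indicator B u \<partial>lborel)
          = (\<integral>\<^sup>+ u. ennreal (q s (u - s)) * indicator B u \<partial>(distr lborel borel ((+) s)))"
        by (simp add: lborel_distr_plus)
      also have "\<dots> = (\<integral>\<^sup>+ y. ennreal (q s (s + y - s)) * indicator B (s + y) \<partial>lborel)"
        by (subst nn_integral_distr) auto
      finally show "(\<integral>\<^sup>+ y. ennreal (q s y) * indicator B (s + y) \<partial>lborel) = (\<integral>\<^sup>+ u. ennreal (q s (u - s)) * indicator B u \<partial>lborel)"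
        by simp
    qed
    also have "\<dots> = (\<integral>\<^sup>+ u. (\<integral>\<^sup>+ s. ennreal (q s (u - s)) * indicator B u \<partial>lborel) \<partial>lborel)"
      by (rule lborel_pair.Fubini'[symmetric]) measurable
    also have "\<dots> = (\<integral>\<^sup>+ u. ennreal (f u) * indicator B u \<partial>lborel)"
    proof (rule nn_integral_cong)
      fix u :: real
      show "(\<integral>\<^sup>+ s. ennreal (q s (u - s)) * indicator B u \<partial>lborel) = ennreal (f u) * indicator B u"
      proof (cases "u > 0")
        case True
        have "(\<integral>\<^sup>+ s. ennreal (q s (u - s)) * indicator B u \<partial>lborel)
            = (\<integral>\<^sup>+ s. (ennreal (E (Suc (Suc m)) u) * indicator B u) * (ennreal (s^m/fact m) * indicator {0<..<u} s) \<partial>lborel)"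
          using True by (intro nn_integral_cong) (auto simp: q_def Enn ennreal_mult[symmetric] mult_ac split: split_indicator)
        also have "\<dots> = (ennreal (E (Suc (Suc m)) u) * indicator B u) * ennreal (u^(Suc m)/fact (Suc m))"
          by (subst nn_integral_cmult) (auto simp: power_integral[OF True])
        also have "\<dots> = ennreal (f u) * indicator B u"
          using True by (simp add: f_def Enn ennreal_mult[symmetric] mult_ac)
        finally show ?thesis .
      next
        case False
        then have z: "\<And>s. ennreal (q s (u - s)) * indicator B u = 0" by (auto simp: q_def)
        show ?thesis unfolding z using False by (simp add: f_def)
      qed
    qed
    also have "\<dots> = emeasure (density lborel (\<lambda>s. ennreal (f s))) B"
      by (subst emeasure_density) auto
    finally show "emeasure (distr (density (lborel \<Otimes>\<^sub>M lborel) (\<lambda>p. ennreal (q (fst p) (snd p)))) lborel (\<lambda>p. fst p + snd p)) B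
        = emeasure (density lborel (\<lambda>s. ennreal (f s))) B" .
  qed
  finally show ?thesis unfolding f_def .
qed

lemma main_law:
  assumes "goodfam E" "finite_measure N" "\<And>i. i < Suc m \<Longrightarrow> Y i \<in> borel_measurable N"
    "AE \<omega> in N. \<forall>i<Suc m. 0 < Y i \<omega>"
    "\<And>x. (\<forall>i<Suc m. 0 \<le> x i) \<Longrightarrow> emeasure N {\<omega>\<in>space N. \<forall>i<Suc m. x i < Y i \<omega>} = ennreal (E 0 (\<Sum>i<Suc m. x i))"
  shows "distr N lborel (\<lambda>\<omega>. \<Sum>i<Suc m. Y i \<omega>) = density lborel (\<lambda>s. ennreal (if 0 < s then s^m/fact m * E (Suc m) s else 0))"
  using assms
proof (induction m arbitrary: E N)
  case 0
  have "distr N lborel (Y 0) = density lborel (\<lambda>s. ennreal (if 0 < s then E 1 s else 0))"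
  proof (rule base_law[OF 0(1,2)])
    show "Y 0 \<in> borel_measurable N" using 0(3) by simp
    show "AE \<omega> in N. 0 < Y 0 \<omega>" using 0(4) by simp
    fix y :: real assume "y \<ge> 0"
    then show "emeasure N {\<omega>\<in>space N. y < Y 0 \<omega>} = ennreal (E 0 y)"
      using 0(5)[of "\<lambda>_. y"] by simp
  qed
  moreover have "(\<lambda>s::real. ennreal (if 0 < s then s ^ 0 / fact 0 * E (Suc 0) s else 0)) = (\<lambda>s. ennreal (if 0 < s then E 1 s else 0))"
    by (rule ext) simp
  ultimately show ?case by simp
next
  case (Suc m)
  note E = Suc.prems(1) and N = Suc.prems(2)
  have Ym[measurable]: "Y i \<in> borel_measurable N" if "i < Suc (Suc m)" for i using Suc.prems(3) that by simp
  define S where "S = (\<lambda>\<omega>. \<Sum>i<Suc m. Y i \<omega>)"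
  define T where "T = Y (Suc m)"
  have Sm[measurable]: "S \<in> borel_measurable N" unfolding S_def by (intro borel_measurable_sum) simp
  have Tm[measurable]: "T \<in> borel_measurable N" unfolding T_def by simp
  have posT: "AE \<omega> in N. 0 < T \<omega>" using Suc.prems(4) unfolding T_def by (auto elim!: eventually_mono)
  have IH: "distr (density N (indicator {\<omega>\<in>space N. y < T \<omega>})) lborel S
        = density lborel (\<lambda>s. ennreal (if 0 < s then s^m/fact m * E (Suc m) (s + y) else 0))" if y: "y > 0" for y
  proof -
    define Ny where "Ny = density N (indicator {\<omega>\<in>space N. y < T \<omega>})"
    have Tset[measurable]: "{\<omega>\<in>space N. y < T \<omega>} \<in> sets N" by measurable
    have sNy: "space Ny = space N" "sets Ny = sets N" unfolding Ny_def by auto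
    have "distr Ny lborel (\<lambda>\<omega>. \<Sum>i<Suc m. Y i \<omega>) = density lborel (\<lambda>s. ennreal (if 0 < s then s^m/fact m * E (Suc m) (s + y) else 0))"
    proof (rule Suc.IH)
      show "goodfam (\<lambda>k s. E k (s + y))" using goodfam_shift[OF E] y by simp
      show "finite_measure Ny" unfolding Ny_def using finite_measure.finite_measure_restricted[OF N Tset] .
      show "Y i \<in> borel_measurable Ny" if "i < Suc m" for i
        by (subst measurable_cong_sets[OF sNy(2) refl]) (use that in simp)
      show "AE \<omega> in Ny. \<forall>i<Suc m. 0 < Y i \<omega>"
        unfolding Ny_def using Suc.prems(4) by (subst AE_density) (auto elim!: eventually_mono)
      fix x :: "nat \<Rightarrow> real" assume x: "\<forall>i<Suc m. 0 \<le> x i"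
      define x' where "x' = x(Suc m := y)"
      have x': "\<forall>i<Suc (Suc m). 0 \<le> x' i" using x y by (auto simp: x'_def less_Suc_eq)
      have "emeasure Ny {\<omega>\<in>space Ny. \<forall>i<Suc m. x i < Y i \<omega>} = emeasure N {\<omega>\<in>space N. \<forall>i<Suc (Suc m). x' i < Y i \<omega>}"
        unfolding Ny_def
        by (subst emeasure_restricted) (auto simp: x'_def T_def less_Suc_eq intro!: arg_cong[where f="emeasure N"])
      also have "\<dots> = ennreal (E 0 (\<Sum>i<Suc (Suc m). x' i))" using Suc.prems(5) x' by blast
      also have "(\<Sum>i<Suc (Suc m). x' i) = (\<Sum>i<Suc m. x i) + y"
        by (simp add: x'_def)
      finally show "emeasure Ny {\<omega>\<in>space Ny. \<forall>i<Suc m. x i < Y i \<omega>} = ennreal (E 0 ((\<Sum>i<Suc m. x i) + y))" .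
    qed
    then show ?thesis unfolding Ny_def S_def .
  qed
  define q where "q = (\<lambda>s y. if 0 < s \<and> 0 < y then s^m/fact m * E (Suc (Suc m)) (s+y) else 0)"
  have pair: "distr N (lborel \<Otimes>\<^sub>M lborel) (\<lambda>\<omega>. (S \<omega>, T \<omega>)) = density (lborel \<Otimes>\<^sub>M lborel) (\<lambda>p. ennreal (q (fst p) (snd p)))"
    by (rule pair_law[OF E N Sm Tm posT IH q_def])
  have "distr N lborel (\<lambda>\<omega>. S \<omega> + T \<omega>) = density lborel (\<lambda>s. ennreal (if 0 < s then s^(Suc m)/fact (Suc m) * E (Suc (Suc m)) s else 0))"
    by (rule sum_law[OF E Sm Tm pair q_def])
  moreover have "(\<lambda>\<omega>. \<Sum>i<Suc (Suc m). Y i \<omega>) = (\<lambda>\<omega>. S \<omega> + T \<omega>)"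
    by (simp add: S_def T_def)
  ultimately show ?case by simp
qed

definition DD :: "real \<Rightarrow> nat \<Rightarrow> real \<Rightarrow> real" where
  "DD l k s = (if k = 0 then exp (- l * sqrt s) else PP l k s)"

lemma exp_sqrt_lim: "l > 0 \<Longrightarrow> ((\<lambda>s. exp (- l * sqrt s)) \<longlongrightarrow> 0) at_top"
proof -
  assume l: "l > 0"
  have "filterlim (\<lambda>s. l * sqrt s) at_top at_top"
    using filterlim_tendsto_pos_mult_at_top[OF tendsto_const[of l] l sqrt_at_top] by simp
  then have "filterlim (\<lambda>s. - (l * sqrt s)) at_bot at_top"
    by (simp add: filterlim_uminus_at_top)
  from filterlim_compose[OF exp_at_bot this] show ?thesis by simp
qed

lemma goodfam_DD:
  assumes l: "l > 0"
  shows "goodfam (DD l)"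
  unfolding goodfam_def
proof (intro conjI allI impI)
  fix k :: nat and s :: real assume s: "s > 0"
  show "(DD l k has_real_derivative - DD l (Suc k) s) (at s)"
  proof (cases "k = 0")
    case True
    have "(PP l 0 has_real_derivative - PP l (Suc 0) s) (at s)" by (rule PP_deriv[OF s])
    then have "(DD l 0 has_real_derivative - PP l (Suc 0) s) (at s)"
      by (rule has_field_derivative_transform_within_open[where S="{0<..}"]) (use s in \<open>auto simp: DD_def PP_def cc.simps\<close>)
    then show ?thesis using True by (simp add: DD_def)
  next
    case False
    then have "DD l k = PP l k" by (auto simp: DD_def fun_eq_iff)
    then show ?thesis using PP_deriv[OF s, of l k] by (simp add: DD_def)
  qed
  show "DD l k s \<ge> 0"
    using cc_nonneg[of l] l by (auto simp: DD_def PP_def intro!: sum_nonneg mult_nonneg_nonneg)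
next
  fix k
  show "(DD l k \<longlongrightarrow> 0) at_top"
  proof (cases "k = 0")
    case True
    have "DD l 0 = (\<lambda>s. exp (- l * sqrt s))" by (simp add: fun_eq_iff DD_def)
    then show ?thesis using exp_sqrt_lim[OF l] True by simp
  next
    case False
    then have "DD l k = (\<lambda>s. \<Sum>j\<le>k. cc l k j * (exp (- l * sqrt s) * s powr (real j / 2 - real k)))"
      by (auto simp: DD_def PP_def fun_eq_iff sum_distrib_left mult_ac)
    moreover have "((\<lambda>s. \<Sum>j\<le>k. cc l k j * (exp (- l * sqrt s) * s powr (real j / 2 - real k))) \<longlongrightarrow> 0) at_top"
    proof (rule tendsto_null_sum)
      fix j assume "j \<in> {..k}"
      then have "real j / 2 - real k < 0" using False by auto
      then have "((\<lambda>s. s powr (real j / 2 - real k)) \<longlongrightarrow> 0) at_top"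
        by (rule tendsto_neg_powr) (rule filterlim_ident)
      from tendsto_mult[OF exp_sqrt_lim[OF l] this]
      have "((\<lambda>s. exp (- l * sqrt s) * s powr (real j / 2 - real k)) \<longlongrightarrow> 0) at_top" by simp
      from tendsto_mult[OF tendsto_const[of "cc l k j"] this]
      show "((\<lambda>s. cc l k j * (exp (- l * sqrt s) * s powr (real j / 2 - real k))) \<longlongrightarrow> 0) at_top" by simp
    qed
    ultimately show ?thesis by simp
  qed
  show "DD l k \<in> borel_measurable borel"
    unfolding DD_def PP_def by measurable
qed



lemma density_formula:
  assumes s: "s > 0"
  shows "s^m/fact m * DD l (Suc m) s = l / (2 ^ (2 * Suc m - 1) * Gamma (real (Suc m))) *
    (\<Sum>k = 0..Suc m - 1. fact (2 * (Suc m - 1) - k) / (fact (Suc m - k - 1) * fact k)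
        * (2 * l) ^ k * s powr ((real k - 1) / 2) * exp (- l * sqrt s))"
proof -
  have G: "Gamma (real (Suc m)) = fact m" using Gamma_fact[of m] by (simp add: add.commute)
  have "DD l (Suc m) s = exp (- l * sqrt s) * (\<Sum>j\<le>Suc m. cc l (Suc m) j * s powr (real j / 2 - real (Suc m)))"
    by (simp add: DD_def PP_def)
  also have "(\<Sum>j\<le>Suc m. cc l (Suc m) j * s powr (real j / 2 - real (Suc m)))
      = (\<Sum>j\<le>m. cf l (Suc m) j * s powr (real (Suc j) / 2 - real (Suc m)))"
    using cc_closed_aux[of l m] by (subst sum.atMost_Suc_shift) simp
  finally have D: "DD l (Suc m) s = exp (- l * sqrt s) * (\<Sum>j\<le>m. cf l (Suc m) j * s powr (real (Suc j) / 2 - real (Suc m)))" .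
  have pw: "s^m * s powr (real (Suc j) / 2 - real (Suc m)) = s powr ((real j - 1) / 2)" for j
  proof -
    have "s^m * s powr (real (Suc j) / 2 - real (Suc m)) = s powr (real m + (real (Suc j) / 2 - real (Suc m)))"
      unfolding powr_add using s by (simp add: powr_realpow)
    also have "real m + (real (Suc j) / 2 - real (Suc m)) = (real j - 1) / 2" by (simp add: field_simps)
    finally show ?thesis .
  qed
  have "s^m/fact m * DD l (Suc m) s = (\<Sum>j\<le>m. s^m/fact m * exp (- l * sqrt s) * cf l (Suc m) j * s powr (real (Suc j) / 2 - real (Suc m)))"
    unfolding D by (simp add: sum_distrib_left mult_ac)
  also have "\<dots> = (\<Sum>j\<le>m. l / (2 ^ (2 * Suc m - 1) * fact m) * (fact (2 * (Suc m - 1) - j) / (fact (Suc m - j - 1) * fact j)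
        * (2 * l) ^ j * s powr ((real j - 1) / 2) * exp (- l * sqrt s)))"
  proof (rule sum.cong[OF refl])
    fix j
    have "s^m/fact m * exp (- l * sqrt s) * cf l (Suc m) j * s powr (real (Suc j) / 2 - real (Suc m))
        = (s^m * s powr (real (Suc j) / 2 - real (Suc m))) / fact m * exp (- l * sqrt s) * cf l (Suc m) j"
      by (simp add: field_simps)
    also have "\<dots> = l / (2 ^ (2 * Suc m - 1) * fact m) * (fact (2 * (Suc m - 1) - j) / (fact (Suc m - j - 1) * fact j)
        * (2 * l) ^ j * s powr ((real j - 1) / 2) * exp (- l * sqrt s))"
      unfolding pw cf_def by (simp add: field_simps)
    finally show "s^m/fact m * exp (- l * sqrt s) * cf l (Suc m) j * s powr (real (Suc j) / 2 - real (Suc m))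
        = l / (2 ^ (2 * Suc m - 1) * fact m) * (fact (2 * (Suc m - 1) - j) / (fact (Suc m - j - 1) * fact j)
        * (2 * l) ^ j * s powr ((real j - 1) / 2) * exp (- l * sqrt s))" .
  qed
  also have "\<dots> = l / (2 ^ (2 * Suc m - 1) * Gamma (real (Suc m))) *
    (\<Sum>k = 0..Suc m - 1. fact (2 * (Suc m - 1) - k) / (fact (Suc m - k - 1) * fact k)
        * (2 * l) ^ k * s powr ((real k - 1) / 2) * exp (- l * sqrt s))"
    unfolding G by (simp add: sum_distrib_left atLeast0AtMost)
  finally show ?thesis .
qed

theorem theorem7:
  fixes M :: "'a measure" and X :: "nat \<Rightarrow> 'a \<Rightarrow> real" and lam :: real and n :: nat
  assumes "prob_space M"
    and "lam > 0"
    and "n \<ge> 1"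
    and "\<And>i. i < n \<Longrightarrow> X i \<in> borel_measurable M"
    and "\<And>x :: nat \<Rightarrow> real. (\<forall>i<n. x i \<ge> 0) \<Longrightarrow>
           measure M {\<omega> \<in> space M. \<forall>i<n. X i \<omega> > x i}
             = exp (- lam * sqrt (\<Sum>i<n. x i))"
  shows "distributed M lborel (\<lambda>\<omega>. \<Sum>i<n. X i \<omega>)
           (\<lambda>x. ennreal (if x > 0 then
              lam / (2 ^ (2 * n - 1) * Gamma (real n)) *
              (\<Sum>k = 0..n - 1. fact (2 * (n - 1) - k) / (fact (n - k - 1) * fact k)
                  * (2 * lam) ^ k * x powr ((real k - 1) / 2) * exp (- lam * sqrt x))
            else 0))"
proof -
  interpret P: prob_space M by fact
  obtain m where n: "n = Suc m" using assms(3) by (cases n) auto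
  have Xm[measurable]: "X i \<in> borel_measurable M" if "i < n" for i using assms(4) that by simp
  have law: "distr M lborel (\<lambda>\<omega>. \<Sum>i<Suc m. X i \<omega>) = density lborel (\<lambda>s. ennreal (if 0 < s then s^m/fact m * DD lam (Suc m) s else 0))"
  proof (rule main_law[OF goodfam_DD[OF assms(2)]])
    show "finite_measure M" by unfold_locales
    show "X i \<in> borel_measurable M" if "i < Suc m" for i using that n Xm by simp
    have "{\<omega> \<in> space M. \<forall>i<n. (\<lambda>_. 0::real) i < X i \<omega>} \<in> sets M" by measurable
    then have "P.prob {\<omega> \<in> space M. \<forall>i<n. (\<lambda>_. 0::real) i < X i \<omega>} = 1"
      using assms(5)[of "\<lambda>_. 0"] by simp
    from P.AE_prob_1[OF this] show "AE \<omega> in M. \<forall>i<Suc m. 0 < X i \<omega>" using n by simp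
    fix x :: "nat \<Rightarrow> real" assume x: "\<forall>i<Suc m. 0 \<le> x i"
    have "emeasure M {\<omega>\<in>space M. \<forall>i<Suc m. x i < X i \<omega>} = ennreal (measure M {\<omega>\<in>space M. \<forall>i<Suc m. x i < X i \<omega>})"
      by (rule P.emeasure_eq_measure)
    also have "\<dots> = ennreal (exp (- lam * sqrt (\<Sum>i<Suc m. x i)))" using assms(5)[of x] x n by simp
    also have "\<dots> = ennreal (DD lam 0 (\<Sum>i<Suc m. x i))" by (simp add: DD_def)
    finally show "emeasure M {\<omega>\<in>space M. \<forall>i<Suc m. x i < X i \<omega>} = ennreal (DD lam 0 (\<Sum>i<Suc m. x i))" .
  qed
  have fe: "(\<lambda>s. ennreal (if 0 < s then s^m/fact m * DD lam (Suc m) s else 0)) =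
    (\<lambda>x. ennreal (if x > 0 then
              lam / (2 ^ (2 * n - 1) * Gamma (real n)) *
              (\<Sum>k = 0..n - 1. fact (2 * (n - 1) - k) / (fact (n - k - 1) * fact k)
                  * (2 * lam) ^ k * x powr ((real k - 1) / 2) * exp (- lam * sqrt x))
            else 0))"
    unfolding n
  proof (rule ext)
    fix s :: real
    show "ennreal (if 0 < s then s^m/fact m * DD lam (Suc m) s else 0) = ennreal (if s > 0 then
              lam / (2 ^ (2 * Suc m - 1) * Gamma (real (Suc m))) *
              (\<Sum>k = 0..Suc m - 1. fact (2 * (Suc m - 1) - k) / (fact (Suc m - k - 1) * fact k)
                  * (2 * lam) ^ k * s powr ((real k - 1) / 2) * exp (- lam * sqrt s))
            else 0)"
    proof (cases "0 < s")
      case True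
      then show ?thesis by (simp only: True if_True density_formula[OF True])
    qed simp
  qed
  show ?thesis
    unfolding distributed_def
  proof (intro conjI)
    show "distr M lborel (\<lambda>\<omega>. \<Sum>i<n. X i \<omega>) = density lborel (\<lambda>x. ennreal (if x > 0 then
              lam / (2 ^ (2 * n - 1) * Gamma (real n)) *
              (\<Sum>k = 0..n - 1. fact (2 * (n - 1) - k) / (fact (n - k - 1) * fact k)
                  * (2 * lam) ^ k * x powr ((real k - 1) / 2) * exp (- lam * sqrt x))
            else 0))"
      using law unfolding fe n .
    show "(\<lambda>x. ennreal (if x > 0 then
              lam / (2 ^ (2 * n - 1) * Gamma (real n)) *
              (\<Sum>k = 0..n - 1. fact (2 * (n - 1) - k) / (fact (n - k - 1) * fact k)
                  * (2 * lam) ^ k * x powr ((real k - 1) / 2) * exp (- lam * sqrt x))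
            else 0)) \<in> borel_measurable lborel"
      unfolding fe[symmetric] unfolding DD_def PP_def by measurable
    show "(\<lambda>\<omega>. \<Sum>i<n. X i \<omega>) \<in> measurable M lborel"
      by (simp add: borel_measurable_sum Xm)
  qed
qed


end
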